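(* Let $\tilde{I} \approx Q_1$ via $\mathbf{S}_1$ and $\tilde{I} \approx Q_2$ via $\mathbf{S}_2$. If $Q_3 = Q_1 \circ Q_2$ via $\mathbf{B}$, then $\tilde{I} \approx Q_3$ via $\mathbf{S}_3$, where $\mathbf{S}_3$ satisfies the matrix equation \[ \mathbf{S}_3 \mathbf{B} = \mathbf{B}_0 ( \mathbf{S}_1 \otimes \mathbf{S}_2 ), \] where \[ \mathbf{B}_0 = \left[ \begin{array}{cccc} 1 & 0 & 0 & D- \lambda^2 \\ 0 & 1 & 1 & 2 \lambda \end{array} \right] \] and $\lambda = [ \sqrt D ]$.
   Context: All forms are properly primitive indefinite integral binary quadratic forms of determinant $D = b^2 - ac > 0$ (not a square), where a form $Q=[a,2b,c]$ is $Q(x_1,x_2) = ax_1^2+2bx_1x_2+cx_2^2 = \mathbf{x}^t \mathbf{Q}\mathbf{x}$ with symmetric matrix $\mathbf{Q} = \left[\begin{array}{cc} a & b\\ b & c\end{array}\right]$. Two forms satisfy $Q_1 \approx Q_2$ via an integer $2\times 2$ matrix $\mathbf{S}$ with $\det \mathbf{S}=1$ if $\mathbf{S}^t \mathbf{Q}_1 \mathbf{S} = \mathbf{Q}_2$. The identity form is $I=[1,0,-D]$, and the reduced identity form $\tilde{I} = [1, 2\lambda, \mu]$ is defined by $I \approx \tilde{I}$ via $\left[\begin{array}{cc} 1 & \lambda \\ 0 & 1\end{array}\right]$ with $\lambda = [\sqrt D]$. A form $Q_3$ is composed of $Q_1$ and $Q_2$ via a $2\times 4$ bilinear matrix $\mathbf{B}$,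 written $Q_3 = Q_1 \circ Q_2$, if $\mathbf{x}^t \mathbf{Q}_1 \mathbf{x}\, \mathbf{y}^t \mathbf{Q}_2 \mathbf{y} = \mathbf{z}^t \mathbf{B}^t \mathbf{Q}_3 \mathbf{B} \mathbf{z}$ identically, where $\mathbf{x}^t=[x_1,x_2]$, $\mathbf{y}^t=[y_1,y_2]$, $\mathbf{z}^t = [x_1y_1, x_1y_2, x_2y_1, x_2y_2]$, and $\mathbf{B}=[b_{ij}]$ is unimodular (its six $2\times 2$ minors $\Delta_{ij}$ formed from columns $i<j$ have gcd 1) and oriented ($a_1\Delta_{12}>0$, $a_2\Delta_{13}>0$ where $a_1,a_2$ are the first coefficients of $Q_1,Q_2$). $\mathbf{S}_1 \otimes \mathbf{S}_2$ denotes the Kronecker product. *)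

theory Defs
  imports Complex_Main "Jordan_Normal_Form.Determinant"
begin

text \<open>A binary quadratic form Q = [a,2b,c] is represented by its symmetric
  integer matrix [[a,b],[b,c]]; its determinant (in the paper's sense) is
  D = b^2 - ac = - det of the matrix.\<close>

definition form_mat :: "int \<Rightarrow> int \<Rightarrow> int \<Rightarrow> int mat" where
  "form_mat a b c = mat_of_rows_list 2 [[a, b], [b, c]]"

definition form_det :: "int mat \<Rightarrow> int" where
  "form_det Q = (Q $$ (0,1))^2 - Q $$ (0,0) * Q $$ (1,1)"

definition is_pp_form :: "int \<Rightarrow> int mat \<Rightarrow> bool" where
  "is_pp_form D Q \<longleftrightarrow> (\<exists>a b c. Q = form_mat a b c \<and> gcd a (gcd b c) = 1) \<and> form_det Q = D"

definition equiv_via :: "int mat \<Rightarrow> int mat \<Rightarrow> int mat \<Rightarrow> bool" where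
  "equiv_via Q1 Q2 S \<longleftrightarrow> S \<in> carrier_mat 2 2 \<and> det S = 1 \<and> transpose_mat S * Q1 * S = Q2"

definition qf :: "int mat \<Rightarrow> int vec \<Rightarrow> int" where
  "qf Q v = v \<bullet> (Q *\<^sub>v v)"

definition minor2 :: "int mat \<Rightarrow> nat \<Rightarrow> nat \<Rightarrow> int" where
  "minor2 B i j = B $$ (0,i) * B $$ (1,j) - B $$ (0,j) * B $$ (1,i)"

definition compose_via :: "int mat \<Rightarrow> int mat \<Rightarrow> int mat \<Rightarrow> int mat \<Rightarrow> bool" where
  "compose_via Q1 Q2 Q3 B \<longleftrightarrow>
     B \<in> carrier_mat 2 4 \<and>
     (\<forall>x1 x2 y1 y2 :: int.
        qf Q1 (vec_of_list [x1, x2]) * qf Q2 (vec_of_list [y1, y2]) =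
        qf (transpose_mat B * Q3 * B) (vec_of_list [x1*y1, x1*y2, x2*y1, x2*y2])) \<and>
     Gcd {minor2 B i j | i j. i < j \<and> j < 4} = 1 \<and>
     Q1 $$ (0,0) * minor2 B 0 1 > 0 \<and> Q2 $$ (0,0) * minor2 B 0 2 > 0"

definition kron :: "int mat \<Rightarrow> int mat \<Rightarrow> int mat" where
  "kron A C = mat (dim_row A * dim_row C) (dim_col A * dim_col C)
     (\<lambda>(i,j). A $$ (i div dim_row C, j div dim_col C) * C $$ (i mod dim_row C, j mod dim_col C))"

definition lam :: "int \<Rightarrow> int" where
  "lam D = \<lfloor>sqrt (real_of_int D)\<rfloor>"

definition id_form :: "int \<Rightarrow> int mat" where
  "id_form D = form_mat 1 0 (- D)"

definition red_shift :: "int \<Rightarrow> int mat" where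
  "red_shift D = mat_of_rows_list 2 [[1, lam D], [0, 1]]"

definition red_id :: "int \<Rightarrow> int mat" where
  "red_id D = transpose_mat (red_shift D) * id_form D * red_shift D"

definition B0 :: "int \<Rightarrow> int mat" where
  "B0 D = mat_of_rows_list 4 [[1, 0, 0, D - (lam D)^2], [0, 1, 1, 2 * lam D]]"

end

theory Submission
  imports Defs
begin

lemma det22: assumes "A \<in> carrier_mat 2 2"
  shows "det A = A$$(0,0)*A$$(1,1) - A$$(0,1)*A$$(1,0)"
proof -
  have "det A = (\<Sum>i<2. A $$ (i,0) * cofactor A i 0)"
    by (rule laplace_expansion_column[OF assms]) auto
  also have "\<dots> = A$$(0,0)*A$$(1,1) - A$$(0,1)*A$$(1,0)"
    using assms by (simp add: numeral_2_eq_2 cofactor_def lessThan_Suc det_single mat_delete_def)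
  finally show ?thesis .
qed

abbreviation m22 :: "int \<Rightarrow> int \<Rightarrow> int \<Rightarrow> int \<Rightarrow> int mat" where
  "m22 a b c d \<equiv> mat_of_rows_list 2 [[a,b],[c,d]]"
abbreviation m24 :: "int \<Rightarrow> int \<Rightarrow> int \<Rightarrow> int \<Rightarrow> int \<Rightarrow> int \<Rightarrow> int \<Rightarrow> int \<Rightarrow> int mat" where
  "m24 a b c d e f g h \<equiv> mat_of_rows_list 4 [[a,b,c,d],[e,f,g,h]]"

lemma less2: "(i::nat) < 2 \<longleftrightarrow> i = 0 \<or> i = 1" by auto
lemma less4: "(i::nat) < 4 \<longleftrightarrow> i = 0 \<or> i = 1 \<or> i = 2 \<or> i = 3" by auto

lemma m22_carrier[simp]: "m22 a b c d \<in> carrier_mat 2 2"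
proof -
  have "length [[a,b],[c,d]] = 2" by simp
  thus ?thesis by (simp only: mat_of_rows_list_def mat_carrier)
qed
lemma m24_carrier[simp]: "m24 a b c d e f g h \<in> carrier_mat 2 4"
proof -
  have "length [[a,b,c,d],[e,f,g,h]] = 2" by simp
  thus ?thesis by (simp only: mat_of_rows_list_def mat_carrier)
qed
lemma m22_dims[simp]: "dim_row (m22 a b c d) = 2" "dim_col (m22 a b c d) = 2"
  using m22_carrier[of a b c d] by (simp_all only: carrier_mat_def mem_Collect_eq)

lemma m22_idx[simp]: "m22 a b c d $$ (0,0) = a" "m22 a b c d $$ (0,1) = b"
  "m22 a b c d $$ (1,0) = c" "m22 a b c d $$ (1,1) = d"
  by (simp_all add: mat_of_rows_list_def)

lemma m24_idx[simp]: "m24 a b c d e f g h $$ (0,0) = a" "m24 a b c d e f g h $$ (0,1) = b"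
  "m24 a b c d e f g h $$ (0,2) = c" "m24 a b c d e f g h $$ (0,3) = d"
  "m24 a b c d e f g h $$ (1,0) = e" "m24 a b c d e f g h $$ (1,1) = f"
  "m24 a b c d e f g h $$ (1,2) = g" "m24 a b c d e f g h $$ (1,3) = h"
  by (simp_all add: mat_of_rows_list_def)


lemma m22_idx'[simp]: "m22 a b c d $$ (0,Suc 0) = b"
  "m22 a b c d $$ (Suc 0,0) = c" "m22 a b c d $$ (Suc 0,Suc 0) = d"
  by (simp_all add: mat_of_rows_list_def)

lemma m24_idx'[simp]: "m24 a b c d e f g h $$ (0,Suc 0) = b"
  "m24 a b c d e f g h $$ (Suc 0,0) = e" "m24 a b c d e f g h $$ (Suc 0,Suc 0) = f"
  "m24 a b c d e f g h $$ (Suc 0,2) = g" "m24 a b c d e f g h $$ (Suc 0,3) = h"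
  by (simp_all add: mat_of_rows_list_def)

lemma m22_eta: assumes "A \<in> carrier_mat 2 2"
  shows "A = m22 (A$$(0,0)) (A$$(0,1)) (A$$(1,0)) (A$$(1,1))"
  apply (rule eq_matI) using assms by (auto simp: mat_of_rows_list_def less2 numeral_2_eq_2 less_Suc_eq)

lemma m24_eta: assumes "A \<in> carrier_mat 2 4"
  shows "A = m24 (A$$(0,0)) (A$$(0,1)) (A$$(0,2)) (A$$(0,3)) (A$$(1,0)) (A$$(1,1)) (A$$(1,2)) (A$$(1,3))"
  apply (rule eq_matI) using assms by (auto simp: mat_of_rows_list_def less4 less2 eval_nat_numeral less_Suc_eq)

lemma m22_eq_iff: "m22 a b c d = m22 a' b' c' d' \<longleftrightarrow> a = a' \<and> b = b' \<and> c = c' \<and> d = d'"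
  by (metis m22_idx)

lemma m24_eq_iff: "m24 a b c d e f g h = m24 a' b' c' d' e' f' g' h' \<longleftrightarrow>
   a = a' \<and> b = b' \<and> c = c' \<and> d = d' \<and> e = e' \<and> f = f' \<and> g = g' \<and> h = h'"
  by (metis m24_idx)

lemma m22_mult: "m22 a b c d * m22 e f g h = m22 (a*e+b*g) (a*f+b*h) (c*e+d*g) (c*f+d*h)"
  by (rule eq_matI) (auto simp: mat_of_rows_list_def scalar_prod_def row_def col_def numeral_2_eq_2 numeral_3_eq_3 less_Suc_eq)

lemma m22_m24_mult: "m22 a b c d * m24 e1 e2 e3 e4 f1 f2 f3 f4 =
   m24 (a*e1+b*f1) (a*e2+b*f2) (a*e3+b*f3) (a*e4+b*f4) (c*e1+d*f1) (c*e2+d*f2) (c*e3+d*f3) (c*e4+d*f4)"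
  by (rule eq_matI) (auto simp: mat_of_rows_list_def scalar_prod_def row_def col_def eval_nat_numeral less_Suc_eq)

lemma m22_transpose: "transpose_mat (m22 a b c d) = m22 a c b d"
  by (rule eq_matI) (auto simp: mat_of_rows_list_def numeral_2_eq_2 numeral_3_eq_3 less_Suc_eq)

lemma m22_det: "det (m22 a b c d) = a*d - b*c"
  by (simp add: det22)

lemma qf22: "qf (m22 a b c d) (vec_of_list [x1,x2]) = a*x1^2 + (b+c)*x1*x2 + d*x2^2"
  by (simp add: qf_def scalar_prod_def mat_of_rows_list_def numeral_2_eq_2 row_def mult_mat_vec_def power2_eq_square algebra_simps)

lemma sign_lemma:
  fixes A E C a b c :: int
  assumes h: "\<And>y1 y2. (A*y1^2 + E*y1*y2 + C*y2^2)^2 = (a*y1^2+2*b*y1*y2+c*y2^2)^2"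
    and pos: "A*a > 0"
  shows "A = a \<and> E = 2*b \<and> C = c"
proof -
  have a0: "a \<noteq> 0" using pos by auto
  have "A^2 = a^2" using h[of 1 0] by simp
  hence "(A - a)*(A + a) = 0" by (simp add: algebra_simps power2_eq_square)
  moreover have "A + a \<noteq> 0" using pos
    by (metis add.inverse_inverse add_eq_0_iff2 mult_minus_left neg_less_0_iff_less not_square_less_zero)
  ultimately have Aa: "A = a" by simp
  have e1: "(a + E + C)^2 = (a+2*b+c)^2" using h[of 1 1] Aa by simp
  have e2: "(a - E + C)^2 = (a-2*b+c)^2" using h[of 1 "-1"] Aa by simp
  have e3: "(a + 2*E + 4*C)^2 = (a+4*b+4*c)^2" using h[of 1 2] Aa by (simp add: mult.commute)
  have e4: "C^2 = c^2" using h[of 0 1] by simp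
  define k1 where "k1 = 2*a*E - 4*a*b"
  define k2 where "k2 = E^2+2*a*C-4*b^2-2*a*c"
  define k3 where "k3 = 2*E*C-4*b*c"
  define k4 where "k4 = C^2-c^2"
  have "k1+k2+k3+k4 = (a + E + C)^2 - (a+2*b+c)^2"
    unfolding k1_def k2_def k3_def k4_def by (simp add: algebra_simps power2_eq_square)
  hence f1: "k1+k2+k3+k4 = 0" using e1 by simp
  have "-k1+k2-k3+k4 = (a - E + C)^2 - (a-2*b+c)^2"
    unfolding k1_def k2_def k3_def k4_def by (simp add: algebra_simps power2_eq_square)
  hence f2: "-k1+k2-k3+k4 = 0" using e2 by simp
  have "2*k1+4*k2+8*k3+16*k4 = (a + 2*E + 4*C)^2 - (a+4*b+4*c)^2"
    unfolding k1_def k2_def k3_def k4_def by (simp add: algebra_simps power2_eq_square)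
  hence f3: "2*k1+4*k2+8*k3+16*k4 = 0" using e3 by simp
  have f4: "k4 = 0" using e4 unfolding k4_def by simp
  have "k1 = 0" "k2 = 0" using f1 f2 f3 f4 by linarith+
  hence g1: "a*(E - 2*b) = 0" and g2: "E^2+2*a*C-4*b^2-2*a*c = 0" unfolding k1_def k2_def by (simp_all add: algebra_simps)
  hence Eb: "E = 2*b" using a0 by simp
  have "E^2+2*a*C-4*b^2-2*a*c = 2*a*(C - c)" using Eb by (simp add: algebra_simps power2_eq_square)
  hence "a*(C - c) = 0" using g2 by simp
  hence "C = c" using a0 by simp
  with Aa Eb show ?thesis by simp
qed

lemma det_sq:
  fixes ka kb kc a b c D G u1 u2 w1 w2 :: int
  assumes h1: "ka*G = a*u1^2+2*b*u1*u2+c*u2^2" and h2: "kc*G = a*w1^2 + 2*b*w1*w2 + c*w2^2"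
   and h3: "(ka+2*kb+kc)*G = a*(u1+w1)^2 + 2*b*(u1+w1)*(u2+w2) + c*(u2+w2)^2"
   and d1: "kb^2 - ka*kc = D" and d3: "b^2 - a*c = D" and D0: "D \<noteq> 0"
  shows "(u1*w2 - w1*u2)^2 = G^2"
proof -
  define hb where "hb = a*u1*w1 + b*(u1*w2+u2*w1) + c*u2*w2"
  have e: "(a*(u1+w1)^2 + 2*b*(u1+w1)*(u2+w2) + c*(u2+w2)^2) - (a*u1^2+2*b*u1*u2+c*u2^2) - (a*w1^2 + 2*b*w1*w2 + c*w2^2) = 2*hb"
    unfolding hb_def by (simp add: power2_eq_square ring_distribs)
  have L: "(a*u1^2+2*b*u1*u2+c*u2^2)*(a*w1^2 + 2*b*w1*w2 + c*w2^2) - hb^2 = (a*c-b^2)*(u1*w2 - w1*u2)^2"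
    unfolding hb_def by (simp add: power2_eq_square ring_distribs)
  have "2*hb = 2*(kb*G)" using e h1 h2 h3 by (simp add: ring_distribs)
  hence hbG: "hb = kb*G" by simp
  have "(ka*G)*(kc*G) - (kb*G)^2 = (a*c-b^2)*(u1*w2 - w1*u2)^2"
    using L unfolding h1[symmetric] h2[symmetric] hbG .
  moreover have "(ka*G)*(kc*G) - (kb*G)^2 = (ka*kc-kb^2)*G^2"
    by (simp add: power2_eq_square ring_distribs)
  moreover have "ka*kc-kb^2 = -D" "a*c-b^2 = -D" using d1 d3 by simp_all
  ultimately have "(-D)*G^2 = (-D)*(u1*w2 - w1*u2)^2" by simp
  thus ?thesis using D0 by simp
qed

lemma minors_lemma:
  fixes p1 p2 p3 p4 q1 q2 q3 q4 a1 b1 c1 a2 b2 c2 a b c D :: int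
  assumes comp: "\<And>x1 x2 y1 y2. (a1*x1^2 + 2*b1*x1*x2 + c1*x2^2) * (a2*y1^2 + 2*b2*y1*y2 + c2*y2^2)
     = a*(p1*x1*y1 + p2*x1*y2 + p3*x2*y1 + p4*x2*y2)^2
       + 2*b*(p1*x1*y1 + p2*x1*y2 + p3*x2*y1 + p4*x2*y2)*(q1*x1*y1 + q2*x1*y2 + q3*x2*y1 + q4*x2*y2)
       + c*(q1*x1*y1 + q2*x1*y2 + q3*x2*y1 + q4*x2*y2)^2"
    and d1: "b1^2 - a1*c1 = D" and d2: "b2^2 - a2*c2 = D" and d3: "b^2 - a*c = D" and D0: "D \<noteq> 0"
    and o1: "a1*(p1*q2 - p2*q1) > 0" and o2: "a2*(p1*q3 - p3*q1) > 0"
  shows "p1*q2-p2*q1 = a1 \<and> p1*q3 - p3*q1 = a2 \<and> p1*q4-p4*q1 = b1+b2 \<and> p2*q3-p3*q2 = b2-b1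
     \<and> p2*q4-p4*q2 = c2 \<and> p3*q4-p4*q3 = c1"
proof -
  have Y: "((p1*q3 - p3*q1)*y1^2 + ((p1*q4-p4*q1)+(p2*q3-p3*q2))*y1*y2 + (p2*q4-p4*q2)*y2^2)^2
      = (a2*y1^2 + 2*b2*y1*y2 + c2*y2^2)^2" for y1 y2
  proof -
    let ?G = "a2*y1^2 + 2*b2*y1*y2 + c2*y2^2"
    have "((p1*y1+p2*y2)*(q3*y1+q4*y2) - (p3*y1+p4*y2)*(q1*y1+q2*y2))^2 = ?G^2"
    proof (rule det_sq[where ka=a1 and kb=b1 and kc=c1 and a=a and b=b and c=c and D=D])
      show "a1*?G = a*(p1*y1+p2*y2)^2 + 2*b*(p1*y1+p2*y2)*(q1*y1+q2*y2) + c*(q1*y1+q2*y2)^2"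
        using comp[of 1 0 y1 y2] by simp
      show "c1*?G = a*(p3*y1+p4*y2)^2 + 2*b*(p3*y1+p4*y2)*(q3*y1+q4*y2) + c*(q3*y1+q4*y2)^2"
        using comp[of 0 1 y1 y2] by simp
      show "(a1+2*b1+c1)*?G = a*((p1*y1+p2*y2)+(p3*y1+p4*y2))^2 + 2*b*((p1*y1+p2*y2)+(p3*y1+p4*y2))*((q1*y1+q2*y2)+(q3*y1+q4*y2)) + c*((q1*y1+q2*y2)+(q3*y1+q4*y2))^2"
        using comp[of 1 1 y1 y2] by (simp add: algebra_simps)
    qed (use d1 d3 D0 in auto)
    moreover have "(p1*y1+p2*y2)*(q3*y1+q4*y2) - (p3*y1+p4*y2)*(q1*y1+q2*y2)
       = (p1*q3 - p3*q1)*y1^2 + ((p1*q4-p4*q1)+(p2*q3-p3*q2))*y1*y2 + (p2*q4-p4*q2)*y2^2"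
      by (simp add: algebra_simps power2_eq_square)
    ultimately show ?thesis by simp
  qed
  have X: "((p1*q2 - p2*q1)*x1^2 + ((p1*q4-p4*q1)-(p2*q3-p3*q2))*x1*x2 + (p3*q4-p4*q3)*x2^2)^2
      = (a1*x1^2 + 2*b1*x1*x2 + c1*x2^2)^2" for x1 x2
  proof -
    let ?G = "a1*x1^2 + 2*b1*x1*x2 + c1*x2^2"
    have "((p1*x1+p3*x2)*(q2*x1+q4*x2) - (p2*x1+p4*x2)*(q1*x1+q3*x2))^2 = ?G^2"
    proof (rule det_sq[where ka=a2 and kb=b2 and kc=c2 and a=a and b=b and c=c and D=D])
      show "a2*?G = a*(p1*x1+p3*x2)^2 + 2*b*(p1*x1+p3*x2)*(q1*x1+q3*x2) + c*(q1*x1+q3*x2)^2"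
        using comp[of x1 x2 1 0] by (simp add: mult.commute)
      show "c2*?G = a*(p2*x1+p4*x2)^2 + 2*b*(p2*x1+p4*x2)*(q2*x1+q4*x2) + c*(q2*x1+q4*x2)^2"
        using comp[of x1 x2 0 1] by (simp add: mult.commute)
      show "(a2+2*b2+c2)*?G = a*((p1*x1+p3*x2)+(p2*x1+p4*x2))^2 + 2*b*((p1*x1+p3*x2)+(p2*x1+p4*x2))*((q1*x1+q3*x2)+(q2*x1+q4*x2)) + c*((q1*x1+q3*x2)+(q2*x1+q4*x2))^2"
        using comp[of x1 x2 1 1] by (simp add: algebra_simps)
    qed (use d2 d3 D0 in auto)
    moreover have "(p1*x1+p3*x2)*(q2*x1+q4*x2) - (p2*x1+p4*x2)*(q1*x1+q3*x2)
       = (p1*q2 - p2*q1)*x1^2 + ((p1*q4-p4*q1)-(p2*q3-p3*q2))*x1*x2 + (p3*q4-p4*q3)*x2^2"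
      by (simp add: algebra_simps power2_eq_square)
    ultimately show ?thesis by simp
  qed
  from sign_lemma[OF Y o2[unfolded mult.commute[of a2]]] sign_lemma[OF X o1[unfolded mult.commute[of a1]]]
  show ?thesis by auto
qed

lemma col_rel:
  fixes xa ya xb yb xk yk xa' ya' xb' yb' xk' yk' :: int
  assumes m12: "xa'*yb' - xb'*ya' = xa*yb - xb*ya"
    and m1k: "xa'*yk' - xk'*ya' = xa*yk - xk*ya"
    and m2k: "xb'*yk' - xk'*yb' = xb*yk - xk*yb"
  shows "(xa'*yb - xb'*ya)*xk + (xb'*xa - xa'*xb)*yk = (xa*yb - xb*ya)*xk'"
    and "(ya'*yb - yb'*ya)*xk + (yb'*xa - ya'*xb)*yk = (xa*yb - xb*ya)*yk'"
proof -
  have "(xa'*yb - xb'*ya)*xk + (xb'*xa - xa'*xb)*yk = xb'*(xa*yk - xk*ya) - xa'*(xb*yk - xk*yb)"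
    by (simp add: algebra_simps)
  also have "\<dots> = xb'*(xa'*yk' - xk'*ya') - xa'*(xb'*yk' - xk'*yb')" using m1k m2k by simp
  also have "\<dots> = (xa'*yb' - xb'*ya')*xk'" by (simp add: algebra_simps)
  finally show "(xa'*yb - xb'*ya)*xk + (xb'*xa - xa'*xb)*yk = (xa*yb - xb*ya)*xk'" using m12 by simp
  have "(ya'*yb - yb'*ya)*xk + (yb'*xa - ya'*xb)*yk = yb'*(xa*yk - xk*ya) - ya'*(xb*yk - xk*yb)"
    by (simp add: algebra_simps)
  also have "\<dots> = yb'*(xa'*yk' - xk'*ya') - ya'*(xb'*yk' - xk'*yb')" using m1k m2k by simp
  also have "\<dots> = (xa'*yb' - xb'*ya')*yk'" by (simp add: algebra_simps)
  finally show "(ya'*yb - yb'*ya)*xk + (yb'*xa - ya'*xb)*yk = (xa*yb - xb*ya)*yk'" using m12 by simp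
qed

lemma dvd_rel:
  fixes n1 n2 u1 u2 w1 w2 d al be :: int
  assumes "n1*u1 + n2*u2 = d*al" "n1*w1 + n2*w2 = d*be"
  shows "d dvd n1*(u1*w2 - w1*u2)" "d dvd n2*(u1*w2 - w1*u2)"
proof -
  have "n1*(u1*w2 - w1*u2) = w2*(n1*u1 + n2*u2) - u2*(n1*w1 + n2*w2)" by (simp add: algebra_simps)
  also have "\<dots> = d*(w2*al - u2*be)" using assms by (simp add: algebra_simps)
  finally show "d dvd n1*(u1*w2 - w1*u2)" by simp
  have "n2*(u1*w2 - w1*u2) = u1*(n1*w1 + n2*w2) - w1*(n1*u1 + n2*u2)" by (simp add: algebra_simps)
  also have "\<dots> = d*(u1*be - w1*al)" using assms by (simp add: algebra_simps)
  finally show "d dvd n2*(u1*w2 - w1*u2)" by simp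
qed

lemma dvd_gcd6:
  fixes d n :: int and A :: "int set"
  assumes "Gcd A = 1" "\<And>x. x \<in> A \<Longrightarrow> d dvd n*x"
  shows "d dvd n"
proof -
  have "d dvd Gcd ((*) n ` A)" using assms(2) by (auto simp: dvd_Gcd_iff)
  also have "Gcd ((*) n ` A) = normalize n" using assms(1) by (simp add: Gcd_mult)
  finally show ?thesis by simp
qed

lemma s3_lemma:
  fixes p1 p2 p3 p4 q1 q2 q3 q4 p1' p2' p3' p4' q1' q2' q3' q4' :: int
  defines "d12 \<equiv> p1*q2-p2*q1" and "d13 \<equiv> p1*q3-p3*q1" and "d14 \<equiv> p1*q4-p4*q1"
    and "d23 \<equiv> p2*q3-p3*q2" and "d24 \<equiv> p2*q4-p4*q2" and "d34 \<equiv> p3*q4-p4*q3"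
  assumes m12: "p1'*q2'-p2'*q1' = d12" and m13: "p1'*q3'-p3'*q1' = d13" and m14: "p1'*q4'-p4'*q1' = d14"
    and m23: "p2'*q3'-p3'*q2' = d23" and m24: "p2'*q4'-p4'*q2' = d24" and m34: "p3'*q4'-p4'*q3' = d34"
    and nz: "d12 \<noteq> 0" and g: "Gcd {d12, d13, d14, d23, d24, d34} = 1"
  shows "\<exists>s1 s2 s3 s4. s1*s4 - s2*s3 = 1 \<and>
     p1' = s1*p1 + s2*q1 \<and> p2' = s1*p2 + s2*q2 \<and> p3' = s1*p3 + s2*q3 \<and> p4' = s1*p4 + s2*q4 \<and>
     q1' = s3*p1 + s4*q1 \<and> q2' = s3*p2 + s4*q2 \<and> q3' = s3*p3 + s4*q3 \<and> q4' = s3*p4 + s4*q4"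
proof -
  define n1 where "n1 = p1'*q2 - p2'*q1"
  define n2 where "n2 = p2'*p1 - p1'*p2"
  define n3 where "n3 = q1'*q2 - q2'*q1"
  define n4 where "n4 = q2'*p1 - q1'*p2"
  have c1: "n1*p1 + n2*q1 = d12*p1'" "n3*p1 + n4*q1 = d12*q1'"
    using m12 unfolding n1_def n2_def n3_def n4_def d12_def
    by (simp_all add: algebra_simps)
  have c2: "n1*p2 + n2*q2 = d12*p2'" "n3*p2 + n4*q2 = d12*q2'"
    using m12 unfolding n1_def n2_def n3_def n4_def d12_def
    by (simp_all add: algebra_simps)
  have c3: "n1*p3 + n2*q3 = d12*p3'" "n3*p3 + n4*q3 = d12*q3'"
    using col_rel[where xa=p1 and ya=q1 and xb=p2 and yb=q2 and xk=p3 and yk=q3 and xa'=p1' and ya'=q1' and xb'=p2' and yb'=q2' and xk'=p3' and yk'=q3'] m12 m13 m23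
    unfolding n1_def n2_def n3_def n4_def d12_def d13_def d23_def
    by (simp_all add: algebra_simps)
  have c4: "n1*p4 + n2*q4 = d12*p4'" "n3*p4 + n4*q4 = d12*q4'"
    using col_rel[where xa=p1 and ya=q1 and xb=p2 and yb=q2 and xk=p4 and yk=q4 and xa'=p1' and ya'=q1' and xb'=p2' and yb'=q2' and xk'=p4' and yk'=q4'] m12 m14 m24
    unfolding n1_def n2_def n3_def n4_def d12_def d14_def d24_def
    by (simp_all add: algebra_simps)
  note F = dvd_rel[OF c1(1) c2(1), folded d12_def] dvd_rel[OF c1(1) c3(1), folded d13_def]
    dvd_rel[OF c1(1) c4(1), folded d14_def] dvd_rel[OF c2(1) c3(1), folded d23_def]
    dvd_rel[OF c2(1) c4(1), folded d24_def] dvd_rel[OF c3(1) c4(1), folded d34_def]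
    dvd_rel[OF c1(2) c2(2), folded d12_def] dvd_rel[OF c1(2) c3(2), folded d13_def]
    dvd_rel[OF c1(2) c4(2), folded d14_def] dvd_rel[OF c2(2) c3(2), folded d23_def]
    dvd_rel[OF c2(2) c4(2), folded d24_def] dvd_rel[OF c3(2) c4(2), folded d34_def]
  have dv: "d12 dvd n" if "n \<in> {n1,n2,n3,n4}" for n
  proof (rule dvd_gcd6[OF g])
    fix x assume "x \<in> {d12, d13, d14, d23, d24, d34}"
    then show "d12 dvd n*x" using that F by (elim insertE emptyE) auto
  qed
  obtain s1 where s1: "n1 = d12*s1" using dv[of n1] by (auto elim: dvdE)
  obtain s2 where s2: "n2 = d12*s2" using dv[of n2] by (auto elim: dvdE)
  obtain s3 where s3: "n3 = d12*s3" using dv[of n3] by (auto elim: dvdE)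
  obtain s4 where s4: "n4 = d12*s4" using dv[of n4] by (auto elim: dvdE)
  have e: "p1' = s1*p1 + s2*q1 \<and> p2' = s1*p2 + s2*q2 \<and> p3' = s1*p3 + s2*q3 \<and> p4' = s1*p4 + s2*q4 \<and>
     q1' = s3*p1 + s4*q1 \<and> q2' = s3*p2 + s4*q2 \<and> q3' = s3*p3 + s4*q3 \<and> q4' = s3*p4 + s4*q4"
  proof -
    have "d12*p1' = d12*(s1*p1 + s2*q1)" "d12*p2' = d12*(s1*p2 + s2*q2)"
      "d12*p3' = d12*(s1*p3 + s2*q3)" "d12*p4' = d12*(s1*p4 + s2*q4)"
      "d12*q1' = d12*(s3*p1 + s4*q1)" "d12*q2' = d12*(s3*p2 + s4*q2)"
      "d12*q3' = d12*(s3*p3 + s4*q3)" "d12*q4' = d12*(s3*p4 + s4*q4)"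
      using c1 c2 c3 c4 s1 s2 s3 s4 by (simp_all add: algebra_simps)
    thus ?thesis using nz by simp
  qed
  have "d12 = p1'*q2'-p2'*q1'" using m12 by simp
  also have "\<dots> = (s1*s4 - s2*s3)*d12" using e unfolding d12_def by (simp add: algebra_simps)
  finally have "s1*s4 - s2*s3 = 1" using nz by simp
  with e show ?thesis by blast
qed

lemma form_mat_m22: "form_mat a b c = m22 a b b c" by (simp add: form_mat_def)

lemma form_det_m22: "form_det (m22 a b b c) = b^2 - a*c" by (simp add: form_det_def)

lemma red_id_m22: "red_id D = m22 1 (lam D) (lam D) ((lam D)^2 - D)"
  by (simp add: red_id_def red_shift_def id_form_def form_mat_def m22_transpose m22_mult power2_eq_square)

lemma sum4: "sum f {0..<4::nat} = f 0 + f 1 + f 2 + f 3"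
  by (simp add: eval_nat_numeral atLeast0_lessThan_Suc algebra_simps)


lemma kron_idx: "i < 4 \<Longrightarrow> j < 4 \<Longrightarrow> kron (m22 s1 s2 s3 s4) (m22 t1 t2 t3 t4) $$ (i,j) =
   m22 s1 s2 s3 s4 $$ (i div 2, j div 2) * m22 t1 t2 t3 t4 $$ (i mod 2, j mod 2)"
  by (simp add: kron_def)

lemma kron_carrier: "kron (m22 s1 s2 s3 s4) (m22 t1 t2 t3 t4) \<in> carrier_mat 4 4"
proof -
  have "kron (m22 s1 s2 s3 s4) (m22 t1 t2 t3 t4) \<in> carrier_mat (2*2) (2*2)"
    unfolding kron_def m22_dims by (rule mat_carrier)
  thus ?thesis by simp
qed

lemma mult_24_44_idx: assumes "A \<in> carrier_mat 2 4" "K \<in> carrier_mat 4 4" "i < 2" "j < 4"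
  shows "(A * K) $$ (i,j) = A$$(i,0)*K$$(0,j) + A$$(i,1)*K$$(1,j) + A$$(i,2)*K$$(2,j) + A$$(i,3)*K$$(3,j)"
  using assms by (simp add: scalar_prod_def sum4)

lemma B0_kron: "B0 D * kron (m22 s1 s2 s3 s4) (m22 t1 t2 t3 t4) =
  m24 (s1*t1 + (D - (lam D)^2)*s3*t3) (s1*t2 + (D - (lam D)^2)*s3*t4)
      (s2*t1 + (D - (lam D)^2)*s4*t3) (s2*t2 + (D - (lam D)^2)*s4*t4)
      (s1*t3 + s3*t1 + 2*lam D*s3*t3) (s1*t4 + s3*t2 + 2*lam D*s3*t4)
      (s2*t3 + s4*t1 + 2*lam D*s4*t3) (s2*t4 + s4*t2 + 2*lam D*s4*t4)"
  (is "?L = ?R")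
proof (rule eq_matI)
  have c: "B0 D \<in> carrier_mat 2 4" by (simp add: B0_def)
  fix i j assume "i < dim_row ?R" "j < dim_col ?R"
  hence ij: "i < 2" "j < 4" by (simp_all add: mat_of_rows_list_def)
  show "?L $$ (i,j) = ?R $$ (i,j)"
    unfolding mult_24_44_idx[OF c kron_carrier ij]
    using ij unfolding less2 less4
    by (elim disjE) (simp_all add: kron_idx B0_def algebra_simps)
qed (simp_all add: B0_def kron_def mat_of_rows_list_def)

lemma pairs4: "{f i j | i j. i < j \<and> j < (4::nat)} = {f 0 1, f 0 2, f 0 3, f 1 2, f 1 3, f 2 3}"
proof -
  have w: "f a b \<in> {f i j | i j. i < j \<and> j < (4::nat)}" if "a < b" "b < 4" for a b
    using that by blast
  have "x \<in> {f 0 1, f 0 2, f 0 3, f 1 2, f 1 3, f 2 3}" if xin: "x \<in> {f i j | i j. i < j \<and> j < (4::nat)}" for x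
  proof -
    obtain i j where x: "x = f i j" "i < j" "j < (4::nat)" using xin by blast
    hence "j = 1 \<and> i = 0 \<or> j = 2 \<and> (i = 0 \<or> i = 1) \<or> j = 3 \<and> (i = 0 \<or> i = 1 \<or> i = 2)" by arith
    thus ?thesis using x(1) by auto
  qed
  moreover have "{f 0 1, f 0 2, f 0 3, f 1 2, f 1 3, f 2 3} \<subseteq> {f i j | i j. i < j \<and> j < (4::nat)}"
    using w[of 0 1] w[of 0 2] w[of 0 3] w[of 1 2] w[of 1 3] w[of 2 3] by simp
  ultimately show ?thesis by blast
qed

lemma minors_set: "{minor2 (m24 p1 p2 p3 p4 q1 q2 q3 q4) i j | i j. i < j \<and> j < 4} =
   {p1*q2-p2*q1, p1*q3-p3*q1, p1*q4-p4*q1, p2*q3-p3*q2, p2*q4-p4*q2, p3*q4-p4*q3}"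
  unfolding pairs4[of "minor2 (m24 p1 p2 p3 p4 q1 q2 q3 q4)"] by (simp add: minor2_def)

lemma qf2vec: "(m22 a b b c *\<^sub>v vec_of_list [u,v]) \<bullet> vec_of_list [u,v] = a*u^2 + 2*b*u*v + c*v^2"
  by (simp add: scalar_prod_def mat_of_rows_list_def mult_mat_vec_def row_def numeral_2_eq_2 power2_eq_square algebra_simps)

lemma m24_vec: "m24 p1 p2 p3 p4 q1 q2 q3 q4 *\<^sub>v vec_of_list [z1,z2,z3,z4] =
   vec_of_list [p1*z1+p2*z2+p3*z3+p4*z4, q1*z1+q2*z2+q3*z3+q4*z4]"
proof (rule eq_vecI)
  show "dim_vec (m24 p1 p2 p3 p4 q1 q2 q3 q4 *\<^sub>v vec_of_list [z1,z2,z3,z4]) =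
    dim_vec (vec_of_list [p1*z1+p2*z2+p3*z3+p4*z4, q1*z1+q2*z2+q3*z3+q4*z4])"
    by (simp add: mat_of_rows_list_def)
  fix i assume "i < dim_vec (vec_of_list [p1*z1+p2*z2+p3*z3+p4*z4, q1*z1+q2*z2+q3*z3+q4*z4])"
  hence "i = 0 \<or> i = 1" by (simp add: less_Suc_eq)
  thus "(m24 p1 p2 p3 p4 q1 q2 q3 q4 *\<^sub>v vec_of_list [z1,z2,z3,z4]) $ i =
    vec_of_list [p1*z1+p2*z2+p3*z3+p4*z4, q1*z1+q2*z2+q3*z3+q4*z4] $ i"
    by (elim disjE) (simp_all add: mat_of_rows_list_def mult_mat_vec_def scalar_prod_def row_def sum4)
qed

lemma qf_BQB: "qf (transpose_mat (m24 p1 p2 p3 p4 q1 q2 q3 q4) * m22 a b b c * m24 p1 p2 p3 p4 q1 q2 q3 q4)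
    (vec_of_list [z1,z2,z3,z4]) =
   a*(p1*z1+p2*z2+p3*z3+p4*z4)^2 + 2*b*(p1*z1+p2*z2+p3*z3+p4*z4)*(q1*z1+q2*z2+q3*z3+q4*z4)
   + c*(q1*z1+q2*z2+q3*z3+q4*z4)^2"
proof -
  let ?B = "m24 p1 p2 p3 p4 q1 q2 q3 q4" and ?z = "vec_of_list [z1,z2,z3,z4]" and ?Q = "m22 a b b c"
  have z: "?z \<in> carrier_vec 4" by (rule carrier_vecI) simp
  have cB: "?B \<in> carrier_mat 2 4" by (rule m24_carrier)
  have cQ: "?Q \<in> carrier_mat 2 2" by (rule m22_carrier)
  have cT: "transpose_mat ?B \<in> carrier_mat 4 2" using cB by (simp only: transpose_carrier_mat)
  have cTQ: "transpose_mat ?B * ?Q \<in> carrier_mat 4 2" by (rule mult_carrier_mat[OF cT cQ])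
  have cBz: "?B *\<^sub>v ?z \<in> carrier_vec 2" by (rule mult_mat_vec_carrier[OF cB z])
  have cQBz: "?Q *\<^sub>v (?B *\<^sub>v ?z) \<in> carrier_vec 2" by (rule mult_mat_vec_carrier[OF cQ cBz])
  have "(transpose_mat ?B * ?Q * ?B) *\<^sub>v ?z = (transpose_mat ?B * ?Q) *\<^sub>v (?B *\<^sub>v ?z)"
    by (rule assoc_mult_mat_vec[OF cTQ cB z])
  also have "\<dots> = transpose_mat ?B *\<^sub>v (?Q *\<^sub>v (?B *\<^sub>v ?z))"
    by (rule assoc_mult_mat_vec[OF cT cQ cBz])
  finally have ab: "(transpose_mat ?B * ?Q * ?B) *\<^sub>v ?z = transpose_mat ?B *\<^sub>v (?Q *\<^sub>v (?B *\<^sub>v ?z))" .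
  have e1: "qf (transpose_mat ?B * ?Q * ?B) ?z = ?z \<bullet> (transpose_mat ?B *\<^sub>v (?Q *\<^sub>v (?B *\<^sub>v ?z)))"
    by (simp only: qf_def ab)
  have e2: "?z \<bullet> (transpose_mat ?B *\<^sub>v (?Q *\<^sub>v (?B *\<^sub>v ?z))) = (transpose_mat ?B *\<^sub>v (?Q *\<^sub>v (?B *\<^sub>v ?z))) \<bullet> ?z"
    by (rule comm_scalar_prod[OF z mult_mat_vec_carrier[OF cT cQBz]])
  have e3: "(transpose_mat ?B *\<^sub>v (?Q *\<^sub>v (?B *\<^sub>v ?z))) \<bullet> ?z = (?Q *\<^sub>v (?B *\<^sub>v ?z)) \<bullet> (?B *\<^sub>v ?z)"
    by (rule transpose_vec_mult_scalar[OF cB z cQBz])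
  have "qf (transpose_mat ?B * ?Q * ?B) ?z = (?Q *\<^sub>v (?B *\<^sub>v ?z)) \<bullet> (?B *\<^sub>v ?z)"
    by (rule trans[OF e1 trans[OF e2 e3]])
  thus ?thesis by (simp only: m24_vec qf2vec)
qed

lemma quad_eq:
  fixes g11 g12 g22 u1 u2 w1 w2 :: int
  assumes hu: "g11*u1^2 + 2*g12*u1*u2 + g22*u2^2 = 0"
    and hw: "g11*w1^2 + 2*g12*w1*w2 + g22*w2^2 = 0"
    and huw: "g11*(u1+w1)^2 + 2*g12*(u1+w1)*(u2+w2) + g22*(u2+w2)^2 = 0"
    and nz: "u1*w2 - w1*u2 \<noteq> 0"
  shows "g11 = 0 \<and> g12 = 0 \<and> g22 = 0"
proof -
  define gb where "gb = g11*u1*w1 + g12*(u1*w2+u2*w1) + g22*u2*w2"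
  have "2*gb = (g11*(u1+w1)^2 + 2*g12*(u1+w1)*(u2+w2) + g22*(u2+w2)^2)
     - (g11*u1^2 + 2*g12*u1*u2 + g22*u2^2) - (g11*w1^2 + 2*g12*w1*w2 + g22*w2^2)"
    unfolding gb_def by (simp add: algebra_simps power2_eq_square)
  hence gb0: "gb = 0" using hu hw huw by simp
  have "(u1*w2 - w1*u2)^2 * g11 = w2^2*(g11*u1^2 + 2*g12*u1*u2 + g22*u2^2) - 2*w2*u2*gb + u2^2*(g11*w1^2 + 2*g12*w1*w2 + g22*w2^2)"
    unfolding gb_def by (simp add: algebra_simps power2_eq_square)
  hence "(u1*w2 - w1*u2)^2 * g11 = 0" using hu hw gb0 by simp
  hence 1: "g11 = 0" using nz by simp
  have "(u1*w2 - w1*u2)^2 * g22 = w1^2*(g11*u1^2 + 2*g12*u1*u2 + g22*u2^2) - 2*w1*u1*gb + u1^2*(g11*w1^2 + 2*g12*w1*w2 + g22*w2^2)"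
    unfolding gb_def by (simp add: algebra_simps power2_eq_square)
  hence "(u1*w2 - w1*u2)^2 * g22 = 0" using hu hw gb0 by simp
  hence 2: "g22 = 0" using nz by simp
  have "(u1*w2 - w1*u2)^2 * g12 = - w2*w1*(g11*u1^2 + 2*g12*u1*u2 + g22*u2^2) + (w2*u1 + u2*w1)*gb - u2*u1*(g11*w1^2 + 2*g12*w1*w2 + g22*w2^2)"
    unfolding gb_def by (simp add: algebra_simps power2_eq_square)
  hence "(u1*w2 - w1*u2)^2 * g12 = 0" using hu hw gb0 by simp
  hence "g12 = 0" using nz by simp
  with 1 2 show ?thesis by simp
qed

lemma B0_id:
  fixes u1 u2 w1 w2 l D :: int
  shows "(u1^2 + 2*l*u1*u2 + (l^2-D)*u2^2) * (w1^2 + 2*l*w1*w2 + (l^2-D)*w2^2)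
   = (u1*w1 + (D - l^2)*u2*w2)^2 + 2*l*(u1*w1 + (D - l^2)*u2*w2)*(u1*w2+u2*w1+2*l*u2*w2)
     + (l^2-D)*(u1*w2+u2*w1+2*l*u2*w2)^2"
  by (simp add: algebra_simps power2_eq_square)

theorem lemma6p2:
  fixes D :: int and Q1 Q2 Q3 S1 S2 B :: "int mat"
  assumes "D > 0" and "\<not> (\<exists>k::int. D = k^2)"
    and "is_pp_form D Q1" and "is_pp_form D Q2" and "is_pp_form D Q3"
    and "equiv_via (red_id D) Q1 S1" and "equiv_via (red_id D) Q2 S2"
    and "compose_via Q1 Q2 Q3 B"
  shows "\<exists>S3. equiv_via (red_id D) Q3 S3 \<and> S3 * B = B0 D * kron S1 S2"
proof -
  have D0: "D \<noteq> 0" using assms(1) by simp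
  obtain a1 b1 c1 where Q1: "Q1 = m22 a1 b1 b1 c1" and d1: "b1^2 - a1*c1 = D"
    using assms(3) unfolding is_pp_form_def form_mat_m22 by (auto simp: form_det_m22)
  obtain a2 b2 c2 where Q2: "Q2 = m22 a2 b2 b2 c2" and d2: "b2^2 - a2*c2 = D"
    using assms(4) unfolding is_pp_form_def form_mat_m22 by (auto simp: form_det_m22)
  obtain a b c where Q3: "Q3 = m22 a b b c" and d3: "b^2 - a*c = D"
    using assms(5) unfolding is_pp_form_def form_mat_m22 by (auto simp: form_det_m22)
  obtain s1 s2 s3 s4 where S1: "S1 = m22 s1 s2 s3 s4"
    using assms(6) m22_eta unfolding equiv_via_def by blast
  obtain t1 t2 t3 t4 where S2: "S2 = m22 t1 t2 t3 t4"
    using assms(7) m22_eta unfolding equiv_via_def by blast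
  have detS1: "s1*s4 - s2*s3 = 1" using assms(6) unfolding equiv_via_def S1 by (simp add: m22_det)
  have detS2: "t1*t4 - t2*t3 = 1" using assms(7) unfolding equiv_via_def S2 by (simp add: m22_det)
  have eS1: "(s1 + s3*lam D)*s1 + (s1*lam D + s3*((lam D)^2 - D))*s3 = a1"
     "(s1 + s3*lam D)*s2 + (s1*lam D + s3*((lam D)^2 - D))*s4 = b1"
     "(s2 + s4*lam D)*s2 + (s2*lam D + s4*((lam D)^2 - D))*s4 = c1"
    using assms(6) unfolding equiv_via_def S1 Q1 red_id_m22 m22_transpose m22_mult m22_eq_iff
    by (simp_all add: algebra_simps)
  have eS2: "(t1 + t3*lam D)*t1 + (t1*lam D + t3*((lam D)^2 - D))*t3 = a2"
     "(t1 + t3*lam D)*t2 + (t1*lam D + t3*((lam D)^2 - D))*t4 = b2"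
     "(t2 + t4*lam D)*t2 + (t2*lam D + t4*((lam D)^2 - D))*t4 = c2"
    using assms(7) unfolding equiv_via_def S2 Q2 red_id_m22 m22_transpose m22_mult m22_eq_iff
    by (simp_all add: algebra_simps)
  obtain p1 p2 p3 p4 q1 q2 q3 q4 where B: "B = m24 p1 p2 p3 p4 q1 q2 q3 q4"
    using assms(8) m24_eta unfolding compose_via_def by blast
  have compB: "(a1*x1^2 + 2*b1*x1*x2 + c1*x2^2) * (a2*y1^2 + 2*b2*y1*y2 + c2*y2^2)
     = a*(p1*x1*y1 + p2*x1*y2 + p3*x2*y1 + p4*x2*y2)^2
       + 2*b*(p1*x1*y1 + p2*x1*y2 + p3*x2*y1 + p4*x2*y2)*(q1*x1*y1 + q2*x1*y2 + q3*x2*y1 + q4*x2*y2)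
       + c*(q1*x1*y1 + q2*x1*y2 + q3*x2*y1 + q4*x2*y2)^2" for x1 x2 y1 y2
  proof -
    have "qf Q1 (vec_of_list [x1, x2]) * qf Q2 (vec_of_list [y1, y2]) =
        qf (transpose_mat B * Q3 * B) (vec_of_list [x1*y1, x1*y2, x2*y1, x2*y2])"
      using assms(8) unfolding compose_via_def by blast
    thus ?thesis unfolding Q1 Q2 Q3 B qf22 qf_BQB by (simp add: algebra_simps)
  qed
  have o1: "a1*(p1*q2 - p2*q1) > 0" and o2: "a2*(p1*q3 - p3*q1) > 0"
    using assms(8) unfolding compose_via_def Q1 Q2 B by (simp_all add: minor2_def)
  have gB: "Gcd {p1*q2-p2*q1, p1*q3-p3*q1, p1*q4-p4*q1, p2*q3-p3*q2, p2*q4-p4*q2, p3*q4-p4*q3} = 1"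
    using assms(8) unfolding compose_via_def B minors_set by blast
  note mB = minors_lemma[OF compB d1 d2 d3 D0 o1 o2]
  have a10: "a1 \<noteq> 0" using o1 by auto
  define p1' where "p1' = s1*t1 + (D - (lam D)^2)*s3*t3"
  define p2' where "p2' = s1*t2 + (D - (lam D)^2)*s3*t4"
  define p3' where "p3' = s2*t1 + (D - (lam D)^2)*s4*t3"
  define p4' where "p4' = s2*t2 + (D - (lam D)^2)*s4*t4"
  define q1' where "q1' = s1*t3 + s3*t1 + 2*lam D*s3*t3"
  define q2' where "q2' = s1*t4 + s3*t2 + 2*lam D*s3*t4"
  define q3' where "q3' = s2*t3 + s4*t1 + 2*lam D*s4*t3"
  define q4' where "q4' = s2*t4 + s4*t2 + 2*lam D*s4*t4"
  have B': "B0 D * kron S1 S2 = m24 p1' p2' p3' p4' q1' q2' q3' q4'"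
    unfolding S1 S2 B0_kron p1'_def p2'_def p3'_def p4'_def q1'_def q2'_def q3'_def q4'_def ..
  have compB': "(a1*x1^2 + 2*b1*x1*x2 + c1*x2^2) * (a2*y1^2 + 2*b2*y1*y2 + c2*y2^2)
     = 1*(p1'*x1*y1 + p2'*x1*y2 + p3'*x2*y1 + p4'*x2*y2)^2
       + 2*lam D*(p1'*x1*y1 + p2'*x1*y2 + p3'*x2*y1 + p4'*x2*y2)*(q1'*x1*y1 + q2'*x1*y2 + q3'*x2*y1 + q4'*x2*y2)
       + ((lam D)^2 - D)*(q1'*x1*y1 + q2'*x1*y2 + q3'*x2*y1 + q4'*x2*y2)^2" for x1 x2 y1 y2
  proof -
    let ?l = "lam D"
    define u1 where "u1 = s1*x1 + s2*x2"
    define u2 where "u2 = s3*x1 + s4*x2"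
    define w1 where "w1 = t1*y1 + t2*y2"
    define w2 where "w2 = t3*y1 + t4*y2"
    have "a1*x1^2 + 2*b1*x1*x2 + c1*x2^2 = u1^2 + 2*?l*u1*u2 + (?l^2-D)*u2^2"
      unfolding eS1[symmetric] u1_def u2_def by (simp add: algebra_simps power2_eq_square)
    moreover have "a2*y1^2 + 2*b2*y1*y2 + c2*y2^2 = w1^2 + 2*?l*w1*w2 + (?l^2-D)*w2^2"
      unfolding eS2[symmetric] w1_def w2_def by (simp add: algebra_simps power2_eq_square)
    moreover have "p1'*x1*y1 + p2'*x1*y2 + p3'*x2*y1 + p4'*x2*y2 = u1*w1 + (D - ?l^2)*u2*w2"
      unfolding p1'_def p2'_def p3'_def p4'_def u1_def u2_def w1_def w2_def by (simp add: algebra_simps)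
    moreover have "q1'*x1*y1 + q2'*x1*y2 + q3'*x2*y1 + q4'*x2*y2 = u1*w2+u2*w1+2*?l*u2*w2"
      unfolding q1'_def q2'_def q3'_def q4'_def u1_def u2_def w1_def w2_def by (simp add: algebra_simps)
    ultimately show ?thesis using B0_id[of u1 ?l u2 D w1 w2] by simp
  qed
  have d3': "(lam D)^2 - 1*((lam D)^2 - D) = D" by simp
  have m12': "p1'*q2' - p2'*q1' = a1"
  proof -
    have "p1'*q2' - p2'*q1' = (s1^2 + 2*lam D*s1*s3 + ((lam D)^2 - D)*s3^2)*(t1*t4 - t2*t3)"
      unfolding p1'_def p2'_def q1'_def q2'_def by (simp add: algebra_simps power2_eq_square)
    also have "\<dots> = a1" using detS2 eS1(1) by (simp add: algebra_simps power2_eq_square)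
    finally show ?thesis .
  qed
  have m13': "p1'*q3' - p3'*q1' = a2"
  proof -
    have "p1'*q3' - p3'*q1' = (t1^2 + 2*lam D*t1*t3 + ((lam D)^2 - D)*t3^2)*(s1*s4 - s2*s3)"
      unfolding p1'_def p3'_def q1'_def q3'_def by (simp add: algebra_simps power2_eq_square)
    also have "\<dots> = a2" using detS1 eS2(1) by (simp add: algebra_simps power2_eq_square)
    finally show ?thesis .
  qed
  have o1': "a1*(p1'*q2' - p2'*q1') > 0" using m12' a10 by (auto simp: zero_less_mult_iff linorder_neq_iff)
  have o2': "a2*(p1'*q3' - p3'*q1') > 0" using m13' o2 mB by auto
  note mB' = minors_lemma[OF compB' d1 d2 d3' D0 o1' o2']
  have "\<exists>r1 r2 r3 r4. r1*r4 - r2*r3 = 1 \<and>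
     p1' = r1*p1 + r2*q1 \<and> p2' = r1*p2 + r2*q2 \<and> p3' = r1*p3 + r2*q3 \<and> p4' = r1*p4 + r2*q4 \<and>
     q1' = r3*p1 + r4*q1 \<and> q2' = r3*p2 + r4*q2 \<and> q3' = r3*p3 + r4*q3 \<and> q4' = r3*p4 + r4*q4"
    by (rule s3_lemma) (use mB mB' gB a10 in simp_all)
  then obtain r1 r2 r3 r4 where r: "r1*r4 - r2*r3 = 1"
     "p1' = r1*p1 + r2*q1" "p2' = r1*p2 + r2*q2" "p3' = r1*p3 + r2*q3" "p4' = r1*p4 + r2*q4"
     "q1' = r3*p1 + r4*q1" "q2' = r3*p2 + r4*q2" "q3' = r3*p3 + r4*q3" "q4' = r3*p4 + r4*q4"
    by blast
  define S3 where "S3 = m22 r1 r2 r3 r4"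
  have prod: "S3 * B = B0 D * kron S1 S2"
    unfolding S3_def B B' m22_m24_mult m24_eq_iff using r by simp
  have form: "transpose_mat S3 * red_id D * S3 = Q3"
  proof -
    let ?l = "lam D"
    define A where "A = r1^2 + 2*?l*r1*r3 + (?l^2 - D)*r3^2"
    define Bb where "Bb = r1*r2 + ?l*(r1*r4 + r3*r2) + (?l^2 - D)*r3*r4"
    define C where "C = r2^2 + 2*?l*r2*r4 + (?l^2 - D)*r4^2"
    have pb: "(a-A)*U^2 + 2*(b-Bb)*U*V + (c-C)*V^2 = (a*U^2 + 2*b*U*V + c*V^2)
       - ((r1*U+r2*V)^2 + 2*?l*(r1*U+r2*V)*(r3*U+r4*V) + (?l^2-D)*(r3*U+r4*V)^2)" for U V
      unfolding A_def Bb_def C_def by (simp add: algebra_simps power2_eq_square)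
    have h1: "a*p1^2 + 2*b*p1*q1 + c*q1^2 = p1'^2 + 2*?l*p1'*q1' + (?l^2-D)*q1'^2"
      using compB[of 1 0 1 0] compB'[of 1 0 1 0] by simp
    have h2: "a*p2^2 + 2*b*p2*q2 + c*q2^2 = p2'^2 + 2*?l*p2'*q2' + (?l^2-D)*q2'^2"
      using compB[of 1 0 0 1] compB'[of 1 0 0 1] by simp
    have h3: "a*(p1+p2)^2 + 2*b*(p1+p2)*(q1+q2) + c*(q1+q2)^2
        = (p1'+p2')^2 + 2*?l*(p1'+p2')*(q1'+q2') + (?l^2-D)*(q1'+q2')^2"
      using compB[of 1 0 1 1] compB'[of 1 0 1 1] by simp
    have hu: "(a-A)*p1^2 + 2*(b-Bb)*p1*q1 + (c-C)*q1^2 = 0"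
      unfolding pb using h1 r(2) r(6) by simp
    have hw: "(a-A)*p2^2 + 2*(b-Bb)*p2*q2 + (c-C)*q2^2 = 0"
      unfolding pb using h2 r(3) r(7) by simp
    have "r1*(p1+p2) + r2*(q1+q2) = p1'+p2'" "r3*(p1+p2) + r4*(q1+q2) = q1'+q2'"
      using r by (simp_all add: algebra_simps)
    hence huw: "(a-A)*(p1+p2)^2 + 2*(b-Bb)*(p1+p2)*(q1+q2) + (c-C)*(q1+q2)^2 = 0"
      unfolding pb using h3 by simp
    have nz: "p1*q2 - p2*q1 \<noteq> 0" using mB a10 by simp
    from quad_eq[OF hu hw huw nz] have "a = A" "b = Bb" "c = C" by simp_all
    thus ?thesis unfolding S3_def Q3 red_id_m22 m22_transpose m22_mult m22_eq_iff A_def Bb_def C_def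
      by (simp add: algebra_simps power2_eq_square)
  qed
  have "equiv_via (red_id D) Q3 S3"
    unfolding equiv_via_def using form r(1) by (simp add: S3_def m22_det)
  with prod show ?thesis by blast
qed

end
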